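(* Let $G$ be a DAG and let $S\subseteq E(G)$ be a matching of reversible edges of $G$ (a set of reversible edges no two of which share an endpoint). Then $|\mathrm{MEC}(G)|\ge 2^{|S|}$.
   Context: An edge $v\to w$ of a DAG $G$ is reversible if replacing it by $w\to v$ yields a DAG that is Markov equivalent to $G$. Markov equivalence: two DAGs on the same vertex set are Markov equivalent if they have the same d-separation statements, where for vertices $a\neq b$ and $Z\subseteq V\setminus\{a,b\}$, $a,b$ are d-connected given $Z$ if there is a path (sequence of vertices, consecutive ones joined by an edge of either direction, endpoints $a\ne b$) on which every internal non-collider is not in $Z$ and every collider (internal vertex with both adjacent path-edges pointing into it) is in $Z$ or has a descendant (itself or a vertex reachable by a directed path) in $Z$; otherwise d-separated. $\mathrm{MEC}(G)$ is the set of DAGs Markov equivalent to $G$. *)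

theory Defs
  imports Main
begin

definition is_dag :: "'a set \<Rightarrow> ('a \<times> 'a) set \<Rightarrow> bool" where
  "is_dag V E \<longleftrightarrow> finite V \<and> E \<subseteq> V \<times> V \<and> acyclic E"

definition is_path :: "'a set \<Rightarrow> ('a \<times> 'a) set \<Rightarrow> 'a \<Rightarrow> 'a \<Rightarrow> 'a list \<Rightarrow> bool" where
  "is_path V E a b p \<longleftrightarrow>
     2 \<le> length p \<and> hd p = a \<and> last p = b \<and> distinct p \<and> set p \<subseteq> V \<and>
     (\<forall>i. Suc i < length p \<longrightarrow> (p ! i, p ! Suc i) \<in> E \<or> (p ! Suc i, p ! i) \<in> E)"

definition is_collider :: "('a \<times> 'a) set \<Rightarrow> 'a list \<Rightarrow> nat \<Rightarrow> bool" where
  "is_collider E p i \<longleftrightarrow> (p ! (i - 1), p ! i) \<in> E \<and> (p ! Suc i, p ! i) \<in> E"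

definition d_connected :: "'a set \<Rightarrow> ('a \<times> 'a) set \<Rightarrow> 'a \<Rightarrow> 'a \<Rightarrow> 'a set \<Rightarrow> bool" where
  "d_connected V E a b Z \<longleftrightarrow> a \<noteq> b \<and>
     (\<exists>p. is_path V E a b p \<and>
        (\<forall>i. 0 < i \<and> Suc i < length p \<longrightarrow>
           (if is_collider E p i then (\<exists>d \<in> Z. (p ! i, d) \<in> E\<^sup>*)
            else p ! i \<notin> Z)))"

definition d_separated :: "'a set \<Rightarrow> ('a \<times> 'a) set \<Rightarrow> 'a \<Rightarrow> 'a \<Rightarrow> 'a set \<Rightarrow> bool" where
  "d_separated V E a b Z \<longleftrightarrow> \<not> d_connected V E a b Z"

definition markov_equiv :: "'a set \<Rightarrow> ('a \<times> 'a) set \<Rightarrow> ('a \<times> 'a) set \<Rightarrow> bool" where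
  "markov_equiv V E1 E2 \<longleftrightarrow>
     (\<forall>a b Z. a \<in> V \<and> b \<in> V \<and> a \<noteq> b \<and> Z \<subseteq> V - {a, b} \<longrightarrow>
        (d_separated V E1 a b Z \<longleftrightarrow> d_separated V E2 a b Z))"

definition MEC :: "'a set \<Rightarrow> ('a \<times> 'a) set \<Rightarrow> ('a \<times> 'a) set set" where
  "MEC V E = {E'. is_dag V E' \<and> markov_equiv V E E'}"

definition reverse_edge :: "('a \<times> 'a) set \<Rightarrow> 'a \<Rightarrow> 'a \<Rightarrow> ('a \<times> 'a) set" where
  "reverse_edge E v w = insert (w, v) (E - {(v, w)})"

definition reversible :: "'a set \<Rightarrow> ('a \<times> 'a) set \<Rightarrow> 'a \<Rightarrow> 'a \<Rightarrow> bool" where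
  "reversible V E v w \<longleftrightarrow> (v, w) \<in> E \<and> is_dag V (reverse_edge E v w) \<and>
     markov_equiv V E (reverse_edge E v w)"

definition edge_matching :: "('a \<times> 'a) set \<Rightarrow> bool" where
  "edge_matching S \<longleftrightarrow> (\<forall>e \<in> S. \<forall>f \<in> S. e \<noteq> f \<longrightarrow> {fst e, snd e} \<inter> {fst f, snd f} = {})"

end

theory Submission
  imports Defs
begin


definition nok :: "('a \<times> 'a) set \<Rightarrow> 'a set \<Rightarrow> 'a \<Rightarrow> 'a \<Rightarrow> 'a \<Rightarrow> bool" where
 "nok E Z a x b \<longleftrightarrow> (if (a,x) \<in> E \<and> (b,x) \<in> E then (\<exists>d\<in>Z. (x,d) \<in> E\<^sup>*) else x \<notin> Z)"

definition dwalk :: "('a \<times> 'a) set \<Rightarrow> 'a set \<Rightarrow> 'a list \<Rightarrow> bool" where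
 "dwalk E Z p \<longleftrightarrow> 2 \<le> length p \<and>
   (\<forall>i. Suc i < length p \<longrightarrow> (p!i, p!Suc i) \<in> E \<or> (p!Suc i, p!i) \<in> E) \<and>
   (\<forall>i. 0 < i \<and> Suc i < length p \<longrightarrow> nok E Z (p!(i-1)) (p!i) (p!Suc i))"

lemma nok_sym: "nok E Z a x b = nok E Z b x a"
  unfolding nok_def by auto

lemma dconn_dwalk:
  assumes "d_connected V E a b Z"
  obtains p where "dwalk E Z p" "distinct p" "hd p = a" "last p = b" "a \<noteq> b"
proof -
  from assms obtain p where p: "is_path V E a b p" "a \<noteq> b"
     "\<forall>i. 0 < i \<and> Suc i < length p \<longrightarrow>
           (if is_collider E p i then (\<exists>d \<in> Z. (p ! i, d) \<in> E\<^sup>*)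
            else p ! i \<notin> Z)"
    unfolding d_connected_def by blast
  have "dwalk E Z p" unfolding dwalk_def nok_def
    using p unfolding is_path_def is_collider_def by auto
  then show ?thesis using that p unfolding is_path_def by blast
qed

lemma run:
  assumes ac: "acyclic E" and dw: "dwalk E Z p" 
  shows "i < j \<Longrightarrow> j < length p \<Longrightarrow> (p!i, p!Suc i) \<in> E \<Longrightarrow> (p!j, p!(j-1)) \<in> E
     \<Longrightarrow> \<exists>d\<in>Z. (p!i, d) \<in> E\<^sup>*"
proof (induction "j - i" arbitrary: i)
  case 0 then show ?case by simp
next
  case (Suc m)
  show ?case
  proof (cases "Suc i = j")
    case True
    then have "(p!i, p!i) \<in> E\<^sup>+" using Suc.prems by auto
    then show ?thesis using ac unfolding acyclic_def by blast
  next
    case False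
    then have lt: "Suc i < j" using Suc.prems by auto
    have lt2: "0 < Suc i \<and> Suc (Suc i) < length p" using lt Suc.prems by auto
    then have "nok E Z (p!(Suc i - 1)) (p!Suc i) (p!Suc (Suc i))"
      using dw unfolding dwalk_def by blast
    then have nk: "nok E Z (p!i) (p!Suc i) (p!Suc (Suc i))" by simp
    show ?thesis
    proof (cases "(p!Suc (Suc i), p!Suc i) \<in> E")
      case True
      then obtain d where "d \<in> Z" "(p!Suc i, d) \<in> E\<^sup>*" using nk Suc.prems unfolding nok_def by auto
      then show ?thesis using Suc.prems(3)
        by (meson converse_rtrancl_into_rtrancl)
    next
      case False
      have "(p!Suc i, p!Suc (Suc i)) \<in> E \<or> (p!Suc (Suc i), p!Suc i) \<in> E"
        using dw lt2 unfolding dwalk_def by blast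
      then have st: "(p!Suc i, p!Suc (Suc i)) \<in> E" using False by blast
      have "\<exists>d\<in>Z. (p!Suc i, d) \<in> E\<^sup>*"
        using Suc.hyps(1)[of "Suc i"] Suc.hyps(2) lt Suc.prems st by auto
      then show ?thesis using Suc.prems(3)
        by (meson converse_rtrancl_into_rtrancl)
    qed
  qed
qed

lemma junction:
  assumes ac: "acyclic E" and dw: "dwalk E Z p" and ij: "0 < i" "i < j" "Suc j < length p"
    and eq: "p!i = p!j"
  shows "nok E Z (p!(i-1)) (p!i) (p!Suc j)"
proof -
  have ni: "nok E Z (p!(i-1)) (p!i) (p!Suc i)" using dw ij unfolding dwalk_def by auto
  have nj: "nok E Z (p!(j-1)) (p!j) (p!Suc j)" using dw ij unfolding dwalk_def by auto
  have si: "(p!i, p!Suc i) \<in> E \<or> (p!Suc i, p!i) \<in> E" using dw ij unfolding dwalk_def by auto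
  have "Suc (j-1) < length p" using ij by auto
  then have "(p!(j-1), p!Suc (j-1)) \<in> E \<or> (p!Suc (j-1), p!(j-1)) \<in> E" using dw unfolding dwalk_def by blast
  moreover have "Suc (j-1) = j" using ij by auto
  ultimately have sj: "(p!(j-1), p!j) \<in> E \<or> (p!j, p!(j-1)) \<in> E" by simp
  show ?thesis
  proof (cases "(p!(i-1), p!i) \<in> E \<and> (p!Suc j, p!i) \<in> E")
    case True
    have "\<exists>d\<in>Z. (p!i, d) \<in> E\<^sup>*"
    proof (cases "(p!Suc i, p!i) \<in> E")
      case True2: True
      then show ?thesis using ni True unfolding nok_def by auto
    next
      case F2: False
      show ?thesis
      proof (cases "(p!(j-1), p!j) \<in> E")
        case True3: True
        then show ?thesis using nj True eq unfolding nok_def by auto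
      next
        case F3: False
        show ?thesis using run[OF ac dw ij(2) _ _ ] si sj F2 F3 ij by auto
      qed
    qed
    then show ?thesis using True unfolding nok_def by auto
  next
    case False
    then have "p!i \<notin> Z" using ni nj eq unfolding nok_def by (auto split: if_splits)
    then show ?thesis using False unfolding nok_def by auto
  qed
qed


lemma dwalk_rev:
  assumes "dwalk E Z p" shows "dwalk E Z (rev p)"
proof -
  let ?n = "length p"
  have L: "2 \<le> length (rev p)" using assms unfolding dwalk_def by simp
  have S: "\<forall>i. Suc i < length (rev p) \<longrightarrow> (rev p!i, rev p!Suc i) \<in> E \<or> (rev p!Suc i, rev p!i) \<in> E"
  proof (intro allI impI)
    fix i assume i: "Suc i < length (rev p)"
    define k where "k = ?n - Suc (Suc i)"
    have k: "Suc k < ?n" "?n - Suc i = Suc k" using i unfolding k_def by auto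
    have "(p!k, p!Suc k) \<in> E \<or> (p!Suc k, p!k) \<in> E" using assms k unfolding dwalk_def by blast
    moreover have "rev p ! i = p ! Suc k" "rev p ! Suc i = p ! k" using i k unfolding k_def
      by (auto simp: rev_nth)
    ultimately show "(rev p!i, rev p!Suc i) \<in> E \<or> (rev p!Suc i, rev p!i) \<in> E" by auto
  qed
  have N: "\<forall>i. 0 < i \<and> Suc i < length (rev p) \<longrightarrow> nok E Z (rev p!(i-1)) (rev p!i) (rev p!Suc i)"
  proof (intro allI impI)
    fix i assume i: "0 < i \<and> Suc i < length (rev p)"
    define k where "k = ?n - Suc i"
    have k: "0 < k" "Suc k < ?n" using i unfolding k_def by auto
    have "nok E Z (p!(k-1)) (p!k) (p!Suc k)" using assms k unfolding dwalk_def by blast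
    moreover have "rev p ! (i-1) = p ! Suc k" "rev p ! i = p ! k" "rev p ! Suc i = p ! (k - 1)"
      using i k unfolding k_def by (auto simp: rev_nth Suc_diff_Suc)
    ultimately show "nok E Z (rev p!(i-1)) (rev p!i) (rev p!Suc i)" using nok_sym by metis
  qed
  show ?thesis using L S N unfolding dwalk_def by blast
qed

lemma dwalk_path:
  assumes ac: "acyclic E" and EV: "E \<subseteq> V \<times> V"
  shows "dwalk E Z p \<Longrightarrow> hd p \<noteq> last p \<Longrightarrow> d_connected V E (hd p) (last p) Z"
proof (induction "length p" arbitrary: p rule: less_induct)
  case less
  note dw = less.prems(1)
  have len: "2 \<le> length p" using dw unfolding dwalk_def by simp
  show ?case
  proof (cases "distinct p")
    case True
    have "set p \<subseteq> V"
    proof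
      fix x assume "x \<in> set p"
      then obtain k where k: "k < length p" "p!k = x" by (auto simp: in_set_conv_nth)
      show "x \<in> V"
      proof (cases "Suc k < length p")
        case True
        then have "(p!k, p!Suc k) \<in> E \<or> (p!Suc k, p!k) \<in> E" using dw unfolding dwalk_def by blast
        then show ?thesis using EV k by auto
      next
        case False
        then have kk: "Suc (k - 1) < length p" "Suc (k-1) = k" using k len by auto
        then have "(p!(k-1), p!Suc (k-1)) \<in> E \<or> (p!Suc (k-1), p!(k-1)) \<in> E" using dw unfolding dwalk_def by blast
        then show ?thesis using EV k kk by auto
      qed
    qed
    then have "is_path V E (hd p) (last p) p" using True dw unfolding is_path_def dwalk_def by auto
    moreover have "\<forall>i. 0 < i \<and> Suc i < length p \<longrightarrow>
           (if is_collider E p i then (\<exists>d \<in> Z. (p ! i, d) \<in> E\<^sup>*)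
            else p ! i \<notin> Z)" using dw unfolding dwalk_def nok_def is_collider_def by auto
    ultimately show ?thesis using less.prems(2) unfolding d_connected_def by blast
  next
    case False
    then obtain i0 j0 where "i0 < length p" "j0 < length p" "i0 \<noteq> j0" "p!i0 = p!j0"
      by (auto simp: distinct_conv_nth)
    then obtain i j where ij: "i < j" "j < length p" "p!i = p!j"
      by (metis linorder_neqE_nat)
    define d where "d = j - i"
    define m where "m = length p - d"
    define f where "f = (\<lambda>k. if k < i then k else k + d)"
    define q where "q = map (\<lambda>k. p ! f k) [0..<m]"
    have lq: "length q = m" unfolding q_def by simp
    have qn: "\<And>k. k < m \<Longrightarrow> q!k = p!(f k)" unfolding q_def by simp
    have d0: "0 < d" using ij unfolding d_def by simp
    have lt: "m < length p" using ij d0 unfolding m_def d_def by auto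
    have hdne: "\<not> (i = 0 \<and> j = length p - 1)"
    proof
      assume "i = 0 \<and> j = length p - 1"
      moreover have "p \<noteq> []" using len by auto
      ultimately have "hd p = last p" using ij len by (simp add: hd_conv_nth last_conv_nth)
      then show False using less.prems(2) by simp
    qed
    have m2: "2 \<le> m" using hdne ij unfolding m_def d_def by auto
    have fi: "f i = j" unfolding f_def d_def using ij by simp
    have qi: "i < m \<Longrightarrow> q!i = p!i" using qn fi ij by simp
    have hq: "hd q = hd p"
    proof -
      have "q!0 = p!0"
      proof (cases "i = 0")
        case True then show ?thesis using qi m2 by simp
      next
        case False then show ?thesis using qn m2 unfolding f_def by simp
      qed
      moreover have "p \<noteq> []" "q \<noteq> []" using len m2 lq by auto
      ultimately show ?thesis by (simp add: hd_conv_nth)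
    qed
    have lastq: "last q = last p"
    proof -
      have "f (m - 1) = length p - 1"
      proof (cases "m - 1 < i")
        case True
        then have "i = m - 1" using ij unfolding m_def d_def by auto
        then have "j = length p - 1" using ij unfolding m_def d_def by auto
        then show ?thesis using ij \<open>i = m-1\<close> True by auto
      next
        case False then show ?thesis unfolding f_def m_def using lt m2 unfolding m_def d_def by auto
      qed
      then have "q ! (m-1) = p ! (length p - 1)" using qn m2 by simp
      moreover have "p \<noteq> []" "q \<noteq> []" using len m2 lq by auto
      ultimately show ?thesis using lq by (simp add: last_conv_nth)
    qed
    have S: "\<forall>k. Suc k < length q \<longrightarrow> (q!k, q!Suc k) \<in> E \<or> (q!Suc k, q!k) \<in> E"
    proof (intro allI impI)
      fix k assume k: "Suc k < length q"
      have pk: "\<And>t. Suc t < length p \<Longrightarrow> (p!t, p!Suc t) \<in> E \<or> (p!Suc t, p!t) \<in> E"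
        using dw unfolding dwalk_def by blast
      consider "Suc k < i" | "Suc k = i" | "i \<le> k" by linarith
      then show "(q!k, q!Suc k) \<in> E \<or> (q!Suc k, q!k) \<in> E"
      proof cases
        case 1 then show ?thesis using qn k lq pk[of k] ij unfolding f_def by auto
      next
        case 2 then show ?thesis using qn k lq pk[of k] ij qi unfolding f_def by auto
      next
        case 3
        have "q!k = p!(k+d)" "q!Suc k = p!(Suc (k+d))" using qn k lq 3 unfolding f_def by auto
        moreover have "Suc (k+d) < length p" using k lq unfolding m_def using lt by auto
        ultimately show ?thesis using pk by auto
      qed
    qed
    have N: "\<forall>k. 0 < k \<and> Suc k < length q \<longrightarrow> nok E Z (q!(k-1)) (q!k) (q!Suc k)"
    proof (intro allI impI)
      fix k assume k: "0 < k \<and> Suc k < length q"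
      have pk: "\<And>t. 0 < t \<Longrightarrow> Suc t < length p \<Longrightarrow> nok E Z (p!(t-1)) (p!t) (p!Suc t)"
        using dw unfolding dwalk_def by blast
      consider "Suc k < i" | "Suc k = i" | "i < k" | "k = i" by linarith
      then show "nok E Z (q!(k-1)) (q!k) (q!Suc k)"
      proof cases
        case 1 then show ?thesis using qn k lq pk[of k] ij unfolding f_def by auto
      next
        case 2 then show ?thesis using qn k lq pk[of k] ij qi unfolding f_def by auto
      next
        case 3
        have "q!(k-1) = p!(k+d-1)" "q!k = p!(k+d)" "q!Suc k = p!(Suc (k+d))" using qn k lq 3 unfolding f_def by auto
        moreover have "Suc (k+d) < length p" using k lq unfolding m_def using lt by auto
        ultimately show ?thesis using pk[of "k+d"] k by auto
      next
        case 4
        have "q!(k-1) = p!(i-1)" "q!k = p!i" "q!Suc k = p!(Suc j)" using qn k lq 4 qi unfolding f_def d_def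
          using ij by auto
        moreover have "Suc j < length p" using k lq 4 ij unfolding m_def d_def by auto
        ultimately show ?thesis using junction[OF ac dw _ ij(1) _ ij(3)] k 4 by auto
      qed
    qed
    have "dwalk E Z q" using S N m2 lq unfolding dwalk_def by auto
    then have "d_connected V E (hd q) (last q) Z" using less.hyps[of q] lt lq less.prems(2) hq lastq by auto
    then show ?thesis using hq lastq by simp
  qed
qed



lemma acyc_asym: "acyclic R \<Longrightarrow> (a,b) \<in> R \<Longrightarrow> (b,a) \<notin> R"
  unfolding acyclic_def by (meson r_into_trancl' trancl_into_trancl2)

lemma acyc_irr: "acyclic R \<Longrightarrow> (a,a) \<notin> R"
  unfolding acyclic_def by blast

locale cov =
  fixes V :: "'a set" and E :: "('a \<times> 'a) set" and v w :: 'a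
  assumes dag: "is_dag V E" and vw: "(v,w) \<in> E"
    and cv: "\<And>u. (u,w) \<in> E \<longleftrightarrow> (u = v \<or> (u,v) \<in> E)"
begin

abbreviation "E' \<equiv> reverse_edge E v w"

lemma ac: "acyclic E" using dag unfolding is_dag_def by simp
lemma EV: "E \<subseteq> V \<times> V" using dag unfolding is_dag_def by simp
lemma wv: "(w,v) \<notin> E" using acyc_asym[OF ac vw] .
lemma vnw: "v \<noteq> w" using acyc_irr[OF ac] vw by auto
lemma memE': "(s,t) \<in> E' \<longleftrightarrow> ((s,t) \<in> E \<and> (s,t) \<noteq> (v,w)) \<or> (s,t) = (w,v)"
  unfolding reverse_edge_def by auto
lemma edge_tr: "(s,t) \<in> E \<Longrightarrow> (s,t) \<noteq> (v,w) \<Longrightarrow> (s,t) \<in> E'"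
  using memE' by auto

lemma reach: "(x,d) \<in> E\<^sup>* \<Longrightarrow> (x,d) \<in> E'\<^sup>* \<or> (x = v \<and> (w,d) \<in> E'\<^sup>*)"
proof (induction rule: converse_rtrancl_induct)
  case base then show ?case by simp
next
  case (step x y)
  show ?case
  proof (cases "(x,y) = (v,w)")
    case True
    then show ?thesis using step vnw by auto
  next
    case False
    then have xy: "(x,y) \<in> E'" using step edge_tr by auto
    from step.IH show ?thesis
    proof
      assume "(y,d) \<in> E'\<^sup>*" then show ?thesis using xy by (meson converse_rtrancl_into_rtrancl)
    next
      assume yv: "y = v \<and> (w,d) \<in> E'\<^sup>*"
      then have "(x,w) \<in> E" using cv step by auto
      moreover have "x \<noteq> v" using yv step acyc_irr[OF ac] by auto
      ultimately have "(x,w) \<in> E'" using edge_tr by auto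
      then show ?thesis using yv by (meson converse_rtrancl_into_rtrancl)
    qed
  qed
qed

lemma rtr: "(x,y) \<in> E'\<^sup>* \<Longrightarrow> (x,y) \<in> E\<^sup>* \<or> ((x,w) \<in> E\<^sup>* \<and> (v,y) \<in> E\<^sup>*)"
proof (induction rule: rtrancl_induct)
  case base then show ?case by simp
next
  case (step y z)
  show ?case
  proof (cases "(y,z) = (w,v)")
    case True
    then show ?thesis using step.IH vw by auto
  next
    case False
    then have "(y,z) \<in> E" using step memE' by auto
    then show ?thesis using step.IH by (meson rtrancl.rtrancl_into_rtrancl)
  qed
qed

lemma no_vw: "(v,w) \<notin> E'\<^sup>*"
proof
  assume a: "(v,w) \<in> E'\<^sup>*"
  then obtain u where u: "(v,u) \<in> E'\<^sup>*" "(u,w) \<in> E'" using vnw by (metis rtranclE)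
  then have "(u,w) \<in> E" "u \<noteq> v" using memE' vnw by auto
  then have uv: "(u,v) \<in> E" using cv by auto
  have "(v,u) \<in> E\<^sup>*" using rtr[OF u(1)] by auto
  then have "(v,v) \<in> E\<^sup>+" using uv by (meson rtrancl_into_trancl1)
  then show False using ac unfolding acyclic_def by blast
qed

lemma tr: "(x,y) \<in> E'\<^sup>+ \<Longrightarrow> (x,y) \<in> E\<^sup>+ \<or> ((x,w) \<in> E'\<^sup>* \<and> (v,y) \<in> E'\<^sup>*)"
proof (induction rule: trancl_induct)
  case (base y)
  then show ?case using memE' by auto
next
  case (step y z)
  show ?case
  proof (cases "(y,z) = (w,v)")
    case True
    then have "(x,w) \<in> E'\<^sup>*" using step(1) by auto
    then show ?thesis using True by auto
  next
    case False
    then have yz: "(y,z) \<in> E" "(y,z) \<in> E'" using step memE' by auto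
    from step.IH show ?thesis
    proof
      assume "(x,y) \<in> E\<^sup>+" then have "(x,z) \<in> E\<^sup>+" using yz by (meson trancl.trancl_into_trancl)
      then show ?thesis by simp
    next
      assume "(x,w) \<in> E'\<^sup>* \<and> (v,y) \<in> E'\<^sup>*"
      then show ?thesis using yz by (meson rtrancl.rtrancl_into_rtrancl)
    qed
  qed
qed

lemma acE': "acyclic E'"
  unfolding acyclic_def
proof (intro allI notI)
  fix x assume "(x,x) \<in> E'\<^sup>+"
  from tr[OF this] show False
  proof
    assume "(x,x) \<in> E\<^sup>+" then show False using ac unfolding acyclic_def by blast
  next
    assume "(x,w) \<in> E'\<^sup>* \<and> (v,x) \<in> E'\<^sup>*"
    then have "(v,w) \<in> E'\<^sup>*" by auto
    then show False using no_vw by simp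
  qed
qed

lemma E'V: "E' \<subseteq> V \<times> V" using EV vw unfolding reverse_edge_def by auto

lemma dagE': "is_dag V E'" using dag acE' E'V unfolding is_dag_def by auto

lemma wvE': "(w,v) \<in> E'" using memE' by auto

lemma cov': "(u,v) \<in> E' \<longleftrightarrow> (u = w \<or> (u,w) \<in> E')"
  using memE' cv vnw acyc_irr[OF ac] by auto

lemma rev_back: "reverse_edge E' w v = E"
  using wv vw unfolding reverse_edge_def by auto

lemma nok_tr2:
  assumes "nok E Z a x b" "(a,x) \<notin> {(v,w),(w,v)}" "(b,x) \<notin> {(v,w),(w,v)}"
    "x = v \<Longrightarrow> (a,x) \<in> E \<Longrightarrow> (b,x) \<in> E \<Longrightarrow> \<exists>d\<in>Z. (v,d) \<in> E'\<^sup>*"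
  shows "nok E' Z a x b"
proof -
  have m: "(a,x) \<in> E' \<longleftrightarrow> (a,x) \<in> E" "(b,x) \<in> E' \<longleftrightarrow> (b,x) \<in> E"
    using assms(2,3) memE' by auto
  show ?thesis
  proof (cases "(a,x) \<in> E \<and> (b,x) \<in> E")
    case True
    then obtain d where d: "d \<in> Z" "(x,d) \<in> E\<^sup>*" using assms(1) unfolding nok_def by auto
    have "\<exists>d\<in>Z. (x,d) \<in> E'\<^sup>*"
    proof (cases "x = v")
      case True then show ?thesis using assms(4) \<open>(a,x) \<in> E \<and> (b,x) \<in> E\<close> by auto
    next
      case False then show ?thesis using reach[OF d(2)] d by auto
    qed
    then show ?thesis using True m unfolding nok_def by auto
  next
    case False
    then show ?thesis using assms(1) m unfolding nok_def by auto
  qed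
qed

lemma nok_tr:
  assumes "nok E Z a x b" "(a,x) \<notin> {(v,w),(w,v)}" "(b,x) \<notin> {(v,w),(w,v)}" "x \<noteq> v"
  shows "nok E' Z a x b"
  using nok_tr2 assms by blast

end


context cov begin

lemma caseA:
  assumes dw: "dwalk E Z p" and ds: "distinct p"
    and np: "\<forall>i. Suc i < length p \<longrightarrow> (p!i, p!Suc i) \<notin> {(v,w),(w,v)}"
  shows "\<exists>q. dwalk E' Z q \<and> hd q = hd p \<and> last q = last p"
proof -
  define n where "n = length p"
  have len: "2 \<le> n" using dw unfolding dwalk_def n_def by simp
  have pS: "\<And>i. Suc i < n \<Longrightarrow> (p!i, p!Suc i) \<in> E \<or> (p!Suc i, p!i) \<in> E"
    using dw unfolding dwalk_def n_def by blast
  have pN: "\<And>i. 0<i \<Longrightarrow> Suc i < n \<Longrightarrow> nok E Z (p!(i-1)) (p!i) (p!Suc i)"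
    using dw unfolding dwalk_def n_def by blast
  have np': "\<And>i. Suc i < n \<Longrightarrow> (p!i, p!Suc i) \<notin> {(v,w),(w,v)} \<and> (p!Suc i, p!i) \<notin> {(v,w),(w,v)}"
  proof -
    fix i assume i: "Suc i < n"
    have "(p!i, p!Suc i) \<notin> {(v,w),(w,v)}" using np i unfolding n_def by blast
    then show "(p!i, p!Suc i) \<notin> {(v,w),(w,v)} \<and> (p!Suc i, p!i) \<notin> {(v,w),(w,v)}" by auto
  qed
  have stepT: "\<And>i. Suc i < n \<Longrightarrow> (p!i, p!Suc i) \<in> E' \<or> (p!Suc i, p!i) \<in> E'"
  proof -
    fix i assume i: "Suc i < n"
    have ne: "(p!i,p!Suc i) \<noteq> (v,w)" "(p!Suc i,p!i) \<noteq> (v,w)" using np'[OF i] by auto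
    from pS[OF i] show "(p!i, p!Suc i) \<in> E' \<or> (p!Suc i, p!i) \<in> E'"
    proof
      assume "(p!i, p!Suc i) \<in> E" then show ?thesis using edge_tr ne by simp
    next
      assume "(p!Suc i, p!i) \<in> E" then show ?thesis using edge_tr ne by simp
    qed
  qed
  have pairs: "\<And>i. 0<i \<Longrightarrow> Suc i < n \<Longrightarrow> (p!(i-1), p!i) \<notin> {(v,w),(w,v)} \<and> (p!Suc i, p!i) \<notin> {(v,w),(w,v)}"
  proof -
    fix i assume i: "0 < i" "Suc i < n"
    have i1: "Suc (i-1) < n" "Suc (i-1) = i" using i by auto
    have "(p!(i-1), p!Suc (i-1)) \<notin> {(v,w),(w,v)}" using np'[OF i1(1)] by blast
    then have "(p!(i-1), p!i) \<notin> {(v,w),(w,v)}" using i1(2) by simp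
    moreover have "(p!Suc i, p!i) \<notin> {(v,w),(w,v)}" using np'[OF i(2)] by blast
    ultimately show "(p!(i-1), p!i) \<notin> {(v,w),(w,v)} \<and> (p!Suc i, p!i) \<notin> {(v,w),(w,v)}" by blast
  qed
  show ?thesis
  proof (cases "\<exists>k. 0<k \<and> Suc k < n \<and> p!k = v \<and> (p!(k-1),v) \<in> E \<and> (p!Suc k, v) \<in> E \<and> \<not>(\<exists>d\<in>Z. (v,d) \<in> E'\<^sup>*)")
    case False
    have N: "\<And>i. 0<i \<Longrightarrow> Suc i < n \<Longrightarrow> nok E' Z (p!(i-1)) (p!i) (p!Suc i)"
    proof -
      fix i assume i: "0 < i" "Suc i < n"
      have h: "p!i = v \<Longrightarrow> (p!(i-1), p!i) \<in> E \<Longrightarrow> (p!Suc i, p!i) \<in> E \<Longrightarrow> \<exists>d\<in>Z. (v,d) \<in> E'\<^sup>*"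
      proof (rule ccontr)
        assume h1: "p!i = v" "(p!(i-1), p!i) \<in> E" "(p!Suc i, p!i) \<in> E" and h2: "\<not> (\<exists>d\<in>Z. (v,d) \<in> E'\<^sup>*)"
        have "\<exists>k. 0<k \<and> Suc k < n \<and> p!k = v \<and> (p!(k-1),v) \<in> E \<and> (p!Suc k, v) \<in> E \<and> \<not>(\<exists>d\<in>Z. (v,d) \<in> E'\<^sup>*)"
          apply (rule exI[of _ i]) using h1 h2 i by simp
        then show False using False by simp
      qed
      have pr: "(p!(i-1), p!i) \<notin> {(v,w),(w,v)}" "(p!Suc i, p!i) \<notin> {(v,w),(w,v)}" using pairs[OF i] by auto
      show "nok E' Z (p!(i-1)) (p!i) (p!Suc i)"
        using nok_tr2[OF pN[OF i] pr h] by simp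
    qed
    have "dwalk E' Z p" using len stepT N unfolding dwalk_def n_def by blast
    then show ?thesis by blast
  next
    case True
    then obtain k where k: "0<k" "Suc k < n" "p!k = v" "(p!(k-1),v) \<in> E" "(p!Suc k, v) \<in> E"
       "\<not>(\<exists>d\<in>Z. (v,d) \<in> E'\<^sup>*)" by blast
    have iv: "\<And>i. i < n \<Longrightarrow> p!i = v \<longleftrightarrow> i = k"
    proof -
      fix i assume "i < n"
      then show "p!i = v \<longleftrightarrow> i = k" using nth_eq_iff_index_eq[OF ds, of i k] k(2,3) unfolding n_def by auto
    qed
    obtain d where d: "d \<in> Z" "(v,d) \<in> E\<^sup>*" using pN[OF k(1,2)] k unfolding nok_def by auto
    have wAn: "\<exists>d\<in>Z. (w,d) \<in> E'\<^sup>*" using reach[OF d(2)] d k(6) by auto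
    define a where "a = p!(k-1)"
    define b where "b = p!Suc k"
    have av: "a \<noteq> v" using iv[of "k-1"] k unfolding a_def by auto
    have bv: "b \<noteq> v" using iv[of "Suc k"] k unfolding b_def by auto
    have aw: "(a,w) \<in> E'" using edge_tr cv k(4) av unfolding a_def by auto
    have bw: "(b,w) \<in> E'" using edge_tr cv k(5) bv unfolding b_def by auto
    define q where "q = p[k := w]"
    have lq: "length q = n" unfolding q_def n_def by simp
    have qn: "\<And>i. i < n \<Longrightarrow> q!i = (if i = k then w else p!i)" unfolding q_def n_def by simp
    have S: "\<And>i. Suc i < n \<Longrightarrow> (q!i, q!Suc i) \<in> E' \<or> (q!Suc i, q!i) \<in> E'"
    proof -
      fix i assume i: "Suc i < n"
      consider "i = k" | "Suc i = k" | "i \<noteq> k \<and> Suc i \<noteq> k" by blast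
      then show "(q!i, q!Suc i) \<in> E' \<or> (q!Suc i, q!i) \<in> E'"
      proof cases
        case 1 then show ?thesis using qn i bw unfolding b_def by auto
      next
        case 2 then show ?thesis using qn i aw k unfolding a_def by auto
      next
        case 3 then show ?thesis using qn i stepT by auto
      qed
    qed
    have N: "\<And>i. 0<i \<Longrightarrow> Suc i < n \<Longrightarrow> nok E' Z (q!(i-1)) (q!i) (q!Suc i)"
    proof -
      fix i assume i: "0 < i" "Suc i < n"
      consider "i = k" | "Suc i = k" | "i = Suc k" | "i \<noteq> k \<and> Suc i \<noteq> k \<and> i \<noteq> Suc k" by blast
      then show "nok E' Z (q!(i-1)) (q!i) (q!Suc i)"
      proof cases
        case 1
        then have "q!(i-1) = a" "q!i = w" "q!Suc i = b" using qn i k unfolding a_def b_def by auto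
        then show ?thesis using aw bw wAn unfolding nok_def by auto
      next
        case 2
        then have e: "q!(i-1) = p!(i-1)" "q!i = a" "q!Suc i = w" using qn i k unfolding a_def by auto
        have "(v, a) \<notin> E" using acyc_asym[OF ac k(4)] unfolding a_def by simp
        then have "a \<notin> Z" using pN[OF i] 2 k unfolding nok_def a_def by auto
        moreover have "(w,a) \<notin> E'" using acyc_asym[OF acE' aw] .
        ultimately show ?thesis using e unfolding nok_def by auto
      next
        case 3
        then have e: "q!(i-1) = w" "q!i = b" "q!Suc i = p!Suc i" using qn i k unfolding b_def by auto
        have "(v, b) \<notin> E" using acyc_asym[OF ac k(5)] unfolding b_def by simp
        then have "b \<notin> Z" using pN[OF i] 3 k unfolding nok_def b_def by auto
        moreover have "(w,b) \<notin> E'" using acyc_asym[OF acE' bw] .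
        ultimately show ?thesis using e unfolding nok_def by auto
      next
        case 4
        then have e: "q!(i-1) = p!(i-1)" "q!i = p!i" "q!Suc i = p!Suc i" using qn i k by auto
        have "p!i \<noteq> v" using iv[of i] 4 i by auto
        then show ?thesis using e nok_tr[OF pN[OF i]] pairs[OF i] by auto
      qed
    qed
    have "dwalk E' Z q" using len lq S N unfolding dwalk_def by auto
    moreover have "hd q = hd p" "last q = last p"
    proof -
      have "q!0 = p!0" "q!(n-1) = p!(n-1)" using qn k len by auto
      moreover have "p \<noteq> []" "q \<noteq> []" using len lq n_def by auto
      ultimately show "hd q = hd p" "last q = last p" using lq n_def by (auto simp: hd_conv_nth last_conv_nth)
    qed
    ultimately show ?thesis by blast
  qed
qed

end


context cov begin

lemma caseB:
  assumes dw: "dwalk E Z p" and ds: "distinct p"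
    and k: "Suc k < length p" "p!k = v" "p!Suc k = w"
  shows "\<exists>q. dwalk E' Z q \<and> hd q = hd p \<and> last q = last p"
proof -
  define n where "n = length p"
  have kn: "Suc k < n" using k n_def by simp
  have len: "2 \<le> n" using dw unfolding dwalk_def n_def by simp
  have pS: "\<And>i. Suc i < n \<Longrightarrow> (p!i, p!Suc i) \<in> E \<or> (p!Suc i, p!i) \<in> E"
    using dw unfolding dwalk_def n_def by blast
  have pN: "\<And>i. 0<i \<Longrightarrow> Suc i < n \<Longrightarrow> nok E Z (p!(i-1)) (p!i) (p!Suc i)"
    using dw unfolding dwalk_def n_def by blast
  have iv: "\<And>i. i < n \<Longrightarrow> p!i = v \<longleftrightarrow> i = k"
  proof -
    fix i assume "i < n"
    then show "p!i = v \<longleftrightarrow> i = k" using nth_eq_iff_index_eq[OF ds, of i k] k unfolding n_def by auto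
  qed
  have iw: "\<And>i. i < n \<Longrightarrow> p!i = w \<longleftrightarrow> i = Suc k"
  proof -
    fix i assume "i < n"
    then show "p!i = w \<longleftrightarrow> i = Suc k" using nth_eq_iff_index_eq[OF ds, of i "Suc k"] k unfolding n_def by auto
  qed
  have sp: "\<And>i. Suc i < n \<Longrightarrow> i \<noteq> k \<Longrightarrow> (p!i, p!Suc i) \<noteq> (v,w) \<and> (p!i, p!Suc i) \<noteq> (w,v)"
  proof -
    fix i assume i: "Suc i < n" "i \<noteq> k"
    have a: "p!i \<noteq> v" using iv[of i] i by simp
    have b: "p!i = w \<Longrightarrow> p!Suc i \<noteq> v" using iv[of "Suc i"] iw[of i] i by simp
    show "(p!i, p!Suc i) \<noteq> (v,w) \<and> (p!i, p!Suc i) \<noteq> (w,v)" using a b by blast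
  qed
  have stepT: "\<And>i. Suc i < n \<Longrightarrow> i \<noteq> k \<Longrightarrow> (p!i, p!Suc i) \<in> E' \<or> (p!Suc i, p!i) \<in> E'"
  proof -
    fix i assume i: "Suc i < n" "i \<noteq> k"
    have ne: "(p!i,p!Suc i) \<noteq> (v,w)" "(p!Suc i,p!i) \<noteq> (v,w)" using sp[OF i] by auto
    from pS[OF i(1)] show "(p!i, p!Suc i) \<in> E' \<or> (p!Suc i, p!i) \<in> E'"
    proof
      assume "(p!i, p!Suc i) \<in> E" then show ?thesis using edge_tr ne by simp
    next
      assume "(p!Suc i, p!i) \<in> E" then show ?thesis using edge_tr ne by simp
    qed
  qed
  have nodeT: "\<And>i. 0<i \<Longrightarrow> Suc i < n \<Longrightarrow> i \<noteq> k \<Longrightarrow> i \<noteq> Suc k \<Longrightarrow> nok E' Z (p!(i-1)) (p!i) (p!Suc i)"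
  proof -
    fix i assume i: "0<i" "Suc i < n" "i \<noteq> k" "i \<noteq> Suc k"
    have i1: "Suc (i-1) < n" "Suc (i-1) = i" "i - 1 \<noteq> k" using i by auto
    have s1: "(p!(i-1), p!Suc (i-1)) \<noteq> (v,w) \<and> (p!(i-1), p!Suc (i-1)) \<noteq> (w,v)" using sp[OF i1(1,3)] .
    have s2: "(p!i, p!Suc i) \<noteq> (v,w) \<and> (p!i, p!Suc i) \<noteq> (w,v)" using sp[OF i(2,3)] .
    have pr: "(p!(i-1), p!i) \<notin> {(v,w),(w,v)}" "(p!Suc i, p!i) \<notin> {(v,w),(w,v)}"
      using s1 s2 i1(2) by auto
    have "p!i \<noteq> v" using iv[of i] i by simp
    then show "nok E' Z (p!(i-1)) (p!i) (p!Suc i)" using nok_tr[OF pN[OF i(1,2)] pr] by simp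
  qed
  have hdlast: "\<And>q. length q = n - 1 \<Longrightarrow> 3 \<le> n \<Longrightarrow> q!0 = p!0 \<Longrightarrow> q!(n-2) = p!(n-1) \<Longrightarrow> hd q = hd p \<and> last q = last p"
  proof -
    fix q :: "'a list" assume q: "length q = n - 1" "3 \<le> n" "q!0 = p!0" "q!(n-2) = p!(n-1)"
    have "p \<noteq> []" "q \<noteq> []" using q n_def by auto
    moreover have "length q - 1 = n - 2" using q by simp
    ultimately show "hd q = hd p \<and> last q = last p" using q n_def by (simp add: hd_conv_nth last_conv_nth)
  qed
  have vwZ: "(v,w) \<notin> E'" using memE' vnw by simp
  show ?thesis
  proof (cases "0 < k \<and> (p!(k-1), v) \<in> E")
    case I: True
    define a where "a = p!(k-1)"
    have av: "a \<noteq> v" using iv[of "k-1"] I kn unfolding a_def by auto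
    have aw: "(a, w) \<in> E'" using edge_tr cv I av unfolding a_def by auto
    have n3: "3 \<le> n" using I kn by auto
    define q where "q = map (\<lambda>i. p!(if i<k then i else Suc i)) [0..<n-1]"
    have lq: "length q = n - 1" unfolding q_def by simp
    have qn: "\<And>i. i < n - 1 \<Longrightarrow> q!i = p!(if i<k then i else Suc i)" unfolding q_def by simp
    have S: "\<And>i. Suc i < n - 1 \<Longrightarrow> (q!i, q!Suc i) \<in> E' \<or> (q!Suc i, q!i) \<in> E'"
    proof -
      fix i assume i: "Suc i < n - 1"
      consider "Suc i < k" | "Suc i = k" | "k \<le> i" by linarith
      then show "(q!i, q!Suc i) \<in> E' \<or> (q!Suc i, q!i) \<in> E'"
      proof cases
        case 1
        then have "q!i = p!i" "q!Suc i = p!Suc i" using qn i by auto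
        then show ?thesis using stepT[of i] i 1 by auto
      next
        case 2
        then have "q!i = a" "q!Suc i = w" using qn i k unfolding a_def by auto
        then show ?thesis using aw by simp
      next
        case 3
        then have "q!i = p!Suc i" "q!Suc i = p!Suc (Suc i)" using qn i by auto
        then show ?thesis using stepT[of "Suc i"] i 3 by auto
      qed
    qed
    have N: "\<And>i. 0<i \<Longrightarrow> Suc i < n - 1 \<Longrightarrow> nok E' Z (q!(i-1)) (q!i) (q!Suc i)"
    proof -
      fix i assume i: "0 < i" "Suc i < n - 1"
      consider "Suc i < k" | "Suc i = k" | "i = k" | "k < i" by linarith
      then show "nok E' Z (q!(i-1)) (q!i) (q!Suc i)"
      proof cases
        case 1
        then have "q!(i-1) = p!(i-1)" "q!i = p!i" "q!Suc i = p!Suc i" using qn i by auto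
        then show ?thesis using nodeT[of i] i 1 by auto
      next
        case 2
        then have e: "q!(i-1) = p!(i-1)" "q!i = a" "q!Suc i = w" using qn i k unfolding a_def by auto
        have "(v, a) \<notin> E" using acyc_asym[OF ac] I unfolding a_def by blast
        moreover have "nok E Z (p!(i-1)) a v" using pN[of i] i 2 k unfolding a_def by auto
        ultimately have "a \<notin> Z" unfolding nok_def by auto
        moreover have "(w,a) \<notin> E'" using acyc_asym[OF acE' aw] .
        ultimately show ?thesis using e unfolding nok_def by auto
      next
        case 3
        define b where "b = p!Suc (Suc k)"
        have e: "q!(i-1) = a" "q!i = w" "q!Suc i = b" using qn i k 3 I unfolding a_def b_def by auto
        have sk: "Suc (Suc k) < n" using i 3 by auto
        have bv: "b \<noteq> v" using iv[of "Suc (Suc k)"] sk unfolding b_def by auto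
        have nk: "nok E Z v w b" using pN[of "Suc k"] sk k unfolding b_def by auto
        show ?thesis
        proof (cases "(b,w) \<in> E")
          case True
          then obtain d where d: "d \<in> Z" "(w,d) \<in> E\<^sup>*" using nk vw unfolding nok_def by auto
          have "(w,d) \<in> E'\<^sup>*" using reach[OF d(2)] vnw by auto
          moreover have "(b,w) \<in> E'" using edge_tr True bv by auto
          ultimately show ?thesis using e aw d unfolding nok_def by auto
        next
          case False
          then have "w \<notin> Z" using nk unfolding nok_def by auto
          moreover have "(b,w) \<notin> E'" using False memE' vnw by auto
          ultimately show ?thesis using e unfolding nok_def by auto
        qed
      next
        case 4
        then have "q!(i-1) = p!i" "q!i = p!Suc i" "q!Suc i = p!Suc (Suc i)" using qn i by auto
        then show ?thesis using nodeT[of "Suc i"] i 4 by auto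
      qed
    qed
    have "dwalk E' Z q" using n3 lq S N unfolding dwalk_def by auto
    moreover have "q!0 = p!0" using qn I n3 by auto
    moreover have "q!(n-2) = p!(n-1)"
    proof -
      have "n - 2 < n - 1" "\<not> n - 2 < k" "Suc (n-2) = n - 1" using n3 kn by auto
      then show ?thesis using qn[of "n-2"] by simp
    qed
    ultimately show ?thesis using hdlast[OF lq n3] by blast
  next
    case notI: False
    have notI': "0 < k \<Longrightarrow> (p!(k-1), v) \<notin> E'"
    proof -
      assume k0: "0 < k"
      have "(p!(k-1), v) \<notin> E" using notI k0 by blast
      moreover have "p!(k-1) \<noteq> w" using iw[of "k-1"] kn by auto
      ultimately show ?thesis using memE' by auto
    qed
    have vZ: "0 < k \<Longrightarrow> v \<notin> Z"
    proof -
      assume k0: "0 < k"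
      have "nok E Z (p!(k-1)) v w" using pN[of k] k0 kn k by auto
      then show ?thesis using notI k0 unfolding nok_def by auto
    qed
    show ?thesis
    proof (cases "Suc (Suc k) < n \<and> (p!Suc (Suc k), w) \<in> E")
      case II: True
      define b where "b = p!Suc (Suc k)"
      have bv: "b \<noteq> v" using iv[of "Suc (Suc k)"] II unfolding b_def by auto
      have bvE: "(b,v) \<in> E" using cv II bv unfolding b_def by auto
      have bvE': "(b,v) \<in> E'" using edge_tr bvE bv by auto
      have n3: "3 \<le> n" using II by auto
      define q where "q = map (\<lambda>i. p!(if i < Suc k then i else Suc i)) [0..<n-1]"
      have lq: "length q = n - 1" unfolding q_def by simp
      have qn: "\<And>i. i < n - 1 \<Longrightarrow> q!i = p!(if i < Suc k then i else Suc i)" unfolding q_def by simp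
      have S: "\<And>i. Suc i < n - 1 \<Longrightarrow> (q!i, q!Suc i) \<in> E' \<or> (q!Suc i, q!i) \<in> E'"
      proof -
        fix i assume i: "Suc i < n - 1"
        consider "i < k" | "i = k" | "Suc k \<le> i" by linarith
        then show "(q!i, q!Suc i) \<in> E' \<or> (q!Suc i, q!i) \<in> E'"
        proof cases
          case 1
          then have "q!i = p!i" "q!Suc i = p!Suc i" using qn i by auto
          then show ?thesis using stepT[of i] i 1 by auto
        next
          case 2
          then have "q!i = v" "q!Suc i = b" using qn i k unfolding b_def by auto
          then show ?thesis using bvE' by simp
        next
          case 3
          then have "q!i = p!Suc i" "q!Suc i = p!Suc (Suc i)" using qn i by auto
          then show ?thesis using stepT[of "Suc i"] i 3 by auto
        qed
      qed
      have N: "\<And>i. 0<i \<Longrightarrow> Suc i < n - 1 \<Longrightarrow> nok E' Z (q!(i-1)) (q!i) (q!Suc i)"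
      proof -
        fix i assume i: "0 < i" "Suc i < n - 1"
        consider "i < k" | "i = k" | "i = Suc k" | "Suc k < i" by linarith
        then show "nok E' Z (q!(i-1)) (q!i) (q!Suc i)"
        proof cases
          case 1
          then have "q!(i-1) = p!(i-1)" "q!i = p!i" "q!Suc i = p!Suc i" using qn i by auto
          then show ?thesis using nodeT[of i] i 1 by auto
        next
          case 2
          then have e: "q!(i-1) = p!(k-1)" "q!i = v" "q!Suc i = b" using qn i k unfolding b_def by auto
          show ?thesis using e notI' vZ i 2 unfolding nok_def by auto
        next
          case 3
          define c where "c = p!Suc (Suc (Suc k))"
          have e: "q!(i-1) = v" "q!i = b" "q!Suc i = c" using qn i k 3 unfolding b_def c_def by auto
          have sk: "Suc (Suc (Suc k)) < n" using i 3 by auto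
          have "nok E Z w b c" using pN[of "Suc (Suc k)"] sk k unfolding b_def c_def by auto
          moreover have "(w,b) \<notin> E" using acyc_asym[OF ac] II unfolding b_def by blast
          ultimately have "b \<notin> Z" unfolding nok_def by auto
          moreover have "(v,b) \<notin> E'" using acyc_asym[OF acE' bvE'] .
          ultimately show ?thesis using e unfolding nok_def by auto
        next
          case 4
          then have "q!(i-1) = p!i" "q!i = p!Suc i" "q!Suc i = p!Suc (Suc i)" using qn i by auto
          then show ?thesis using nodeT[of "Suc i"] i 4 by auto
        qed
      qed
      have "dwalk E' Z q" using n3 lq S N unfolding dwalk_def by auto
      moreover have "q!0 = p!0" using qn II n3 by auto
      moreover have "q!(n-2) = p!(n-1)"
      proof -
        have "n - 2 < n - 1" "\<not> n - 2 < Suc k" "Suc (n-2) = n - 1" using n3 II by auto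
        then show ?thesis using qn[of "n-2"] by simp
      qed
      ultimately show ?thesis using hdlast[OF lq n3] by blast
    next
      case notII: False
      have S: "\<And>i. Suc i < n \<Longrightarrow> (p!i, p!Suc i) \<in> E' \<or> (p!Suc i, p!i) \<in> E'"
      proof -
        fix i assume i: "Suc i < n"
        show "(p!i, p!Suc i) \<in> E' \<or> (p!Suc i, p!i) \<in> E'"
        proof (cases "i = k")
          case True then show ?thesis using k wvE' by simp
        next
          case False then show ?thesis using stepT i by simp
        qed
      qed
      have N: "\<And>i. 0<i \<Longrightarrow> Suc i < n \<Longrightarrow> nok E' Z (p!(i-1)) (p!i) (p!Suc i)"
      proof -
        fix i assume i: "0 < i" "Suc i < n"
        consider "i = k" | "i = Suc k" | "i \<noteq> k \<and> i \<noteq> Suc k" by blast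
        then show "nok E' Z (p!(i-1)) (p!i) (p!Suc i)"
        proof cases
          case 1
          then show ?thesis using notI' vZ i k unfolding nok_def by auto
        next
          case 2
          have "nok E Z v w (p!Suc i)" using pN[OF i] 2 k by auto
          moreover have "(p!Suc i, w) \<notin> E" using notII 2 i by auto
          ultimately have "w \<notin> Z" unfolding nok_def by auto
          then show ?thesis using vwZ 2 k unfolding nok_def by auto
        next
          case 3 then show ?thesis using nodeT i by auto
        qed
      qed
      have "dwalk E' Z p" using len S N unfolding dwalk_def n_def by auto
      then show ?thesis by blast
    qed
  qed
qed

end


context cov begin

lemma walk_main:
  assumes dw: "dwalk E Z p" and ds: "distinct p"
  shows "\<exists>q. dwalk E' Z q \<and> hd q = hd p \<and> last q = last p"
proof (cases "\<exists>k. Suc k < length p \<and> p!k = v \<and> p!Suc k = w")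
  case True then show ?thesis using caseB dw ds by blast
next
  case F1: False
  show ?thesis
  proof (cases "\<exists>k. Suc k < length p \<and> p!k = w \<and> p!Suc k = v")
    case True
    then obtain k where k: "Suc k < length p" "p!k = w" "p!Suc k = v" by blast
    define r where "r = rev p"
    define j where "j = length p - Suc (Suc k)"
    have j1: "Suc j < length r" using k unfolding r_def j_def by auto
    have j2: "length p - Suc j = Suc k" "length p - Suc (Suc j) = k" using k unfolding j_def by auto
    have rj: "r!j = v" "r!Suc j = w" using j1 j2 k unfolding r_def by (auto simp: rev_nth)
    obtain q where q: "dwalk E' Z q" "hd q = hd (rev p)" "last q = last (rev p)"
      using caseB[OF dwalk_rev[OF dw] _ j1[unfolded r_def] rj[unfolded r_def]] ds by auto
    have "dwalk E' Z (rev q)" using dwalk_rev[OF q(1)] .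
    moreover have "hd (rev q) = hd p" "last (rev q) = last p" using q
      by (auto simp: hd_rev last_rev)
    ultimately show ?thesis by blast
  next
    case False
    have "\<forall>i. Suc i < length p \<longrightarrow> (p!i, p!Suc i) \<notin> {(v,w),(w,v)}"
    proof (intro allI impI)
      fix i assume i: "Suc i < length p"
      have "\<not> (p!i = v \<and> p!Suc i = w)" using F1 i by blast
      moreover have "\<not> (p!i = w \<and> p!Suc i = v)" using False i by blast
      ultimately show "(p!i, p!Suc i) \<notin> {(v,w),(w,v)}" by blast
    qed
    then show ?thesis using caseA dw ds by blast
  qed
qed

lemma dconn_tr:
  assumes "d_connected V E a b Z" shows "d_connected V E' a b Z"
proof -
  obtain p where p: "dwalk E Z p" "distinct p" "hd p = a" "last p = b" "a \<noteq> b"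
    using dconn_dwalk[OF assms] by blast
  obtain q where q: "dwalk E' Z q" "hd q = a" "last q = b" using walk_main[OF p(1,2)] p by auto
  show ?thesis using dwalk_path[OF acE' E'V q(1)] q p(5) by auto
qed

end

lemma covered_equiv:
  assumes "is_dag V E" "(v,w) \<in> E" "\<And>u. (u,w) \<in> E \<longleftrightarrow> (u = v \<or> (u,v) \<in> E)"
  shows "is_dag V (reverse_edge E v w) \<and> markov_equiv V E (reverse_edge E v w)"
proof -
  interpret c: cov V E v w using assms by unfold_locales auto
  interpret c2: cov V "reverse_edge E v w" w v using c.dagE' c.wvE' c.cov' by unfold_locales auto
  have "d_connected V E a b Z \<longleftrightarrow> d_connected V (reverse_edge E v w) a b Z" for a b Z
  proof
    assume "d_connected V E a b Z" then show "d_connected V (reverse_edge E v w) a b Z" using c.dconn_tr by blast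
  next
    assume "d_connected V (reverse_edge E v w) a b Z"
    then have "d_connected V (reverse_edge (reverse_edge E v w) w v) a b Z" using c2.dconn_tr by blast
    then show "d_connected V E a b Z" using c.rev_back by simp
  qed
  then show ?thesis using c.dagE' unfolding markov_equiv_def d_separated_def by auto
qed

lemma chain3:
  assumes dag: "is_dag V G" and am: "(a,m) \<in> G" and mb: "(m,b) \<in> G" and ab: "a \<noteq> b" and mZ: "m \<notin> Z"
  shows "d_connected V G a b Z \<and> d_connected V G b a Z"
proof -
  have ac: "acyclic G" and GV: "G \<subseteq> V \<times> V" using dag unfolding is_dag_def by auto
  have am': "a \<noteq> m" "m \<noteq> b" using acyc_irr[OF ac] am mb by auto
  have bm: "(b,m) \<notin> G" using acyc_asym[OF ac mb] .
  have V3: "a \<in> V" "m \<in> V" "b \<in> V" using GV am mb by auto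
  have i1: "\<And>i. 0 < i \<and> Suc i < length [x,y,z] \<Longrightarrow> i = 1" for x y z :: 'a by auto
  have i2: "\<And>i. Suc i < length [x,y,z] \<Longrightarrow> i = 0 \<or> i = 1" for x y z :: 'a by auto
  have P1: "is_path V G a b [a,m,b]" unfolding is_path_def
    using am' ab V3 am mb i2 by fastforce
  have C1: "\<forall>i. 0 < i \<and> Suc i < length [a,m,b] \<longrightarrow>
           (if is_collider G [a,m,b] i then (\<exists>d \<in> Z. ([a,m,b] ! i, d) \<in> G\<^sup>*) else [a,m,b] ! i \<notin> Z)"
  proof (intro allI impI)
    fix i assume "0 < i \<and> Suc i < length [a,m,b]"
    then have "i = 1" by auto
    then show "if is_collider G [a,m,b] i then (\<exists>d \<in> Z. ([a,m,b] ! i, d) \<in> G\<^sup>*) else [a,m,b] ! i \<notin> Z"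
      using bm mZ unfolding is_collider_def by simp
  qed
  have P2: "is_path V G b a [b,m,a]" unfolding is_path_def
    using am' ab V3 am mb i2 by fastforce
  have C2: "\<forall>i. 0 < i \<and> Suc i < length [b,m,a] \<longrightarrow>
           (if is_collider G [b,m,a] i then (\<exists>d \<in> Z. ([b,m,a] ! i, d) \<in> G\<^sup>*) else [b,m,a] ! i \<notin> Z)"
  proof (intro allI impI)
    fix i assume "0 < i \<and> Suc i < length [b,m,a]"
    then have "i = 1" by auto
    then show "if is_collider G [b,m,a] i then (\<exists>d \<in> Z. ([b,m,a] ! i, d) \<in> G\<^sup>*) else [b,m,a] ! i \<notin> Z"
      using bm mZ unfolding is_collider_def by simp
  qed
  show ?thesis using P1 C1 P2 C2 ab unfolding d_connected_def by blast
qed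

lemma local_markov:
  assumes dag: "is_dag V E" and xy: "(y,x) \<notin> E" "(x,y) \<notin> E\<^sup>*"
  shows "\<not> d_connected V E x y {u. (u,x) \<in> E}"
proof
  define Z where "Z = {u. (u,x) \<in> E}"
  have ac: "acyclic E" using dag unfolding is_dag_def by auto
  assume "d_connected V E x y {u. (u,x) \<in> E}"
  then obtain p where p: "dwalk E Z p" "distinct p" "hd p = x" "last p = y"
    using dconn_dwalk unfolding Z_def by metis
  have len: "2 \<le> length p" using p unfolding dwalk_def by simp
  have "p \<noteq> []" using len by auto
  then have p0: "p!0 = x" using p(3) by (simp add: hd_conv_nth[symmetric])
  have pS: "\<And>i. Suc i < length p \<Longrightarrow> (p!i, p!Suc i) \<in> E \<or> (p!Suc i, p!i) \<in> E"
    using p unfolding dwalk_def by blast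
  have pN: "\<And>i. 0<i \<Longrightarrow> Suc i < length p \<Longrightarrow> nok E Z (p!(i-1)) (p!i) (p!Suc i)"
    using p unfolding dwalk_def by blast
  have claim: "\<And>i. Suc i < length p \<Longrightarrow> (p!i, p!Suc i) \<in> E \<and> (x, p!Suc i) \<in> E\<^sup>*"
  proof -
    fix i show "Suc i < length p \<Longrightarrow> (p!i, p!Suc i) \<in> E \<and> (x, p!Suc i) \<in> E\<^sup>*"
    proof (induction i)
      case 0
      have "(x, p!1) \<in> E"
      proof (rule ccontr)
        assume n: "(x, p!1) \<notin> E"
        then have p1x: "(p!1, x) \<in> E" using pS[of 0] 0 p0 by auto
        show False
        proof (cases "length p = 2")
          case True
          moreover have "p \<noteq> []" using len by auto
          ultimately have "p!1 = y" using p(4) by (simp add: last_conv_nth)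
          then show False using p1x xy by simp
        next
          case False
          then have "Suc 1 < length p" using len by auto
          then have "nok E Z (p!0) (p!1) (p!Suc 1)" using pN[of 1] by simp
          then have "p!1 \<notin> Z" using n p0 unfolding nok_def by auto
          then show False using p1x unfolding Z_def by simp
        qed
      qed
      then show ?case using p0 by simp
    next
      case (Suc i)
      then have IH: "(p!i, p!Suc i) \<in> E" "(x, p!Suc i) \<in> E\<^sup>*" by auto
      have nk: "nok E Z (p!i) (p!Suc i) (p!Suc (Suc i))" using pN[of "Suc i"] Suc.prems by simp
      have "(p!Suc i, p!Suc (Suc i)) \<in> E"
      proof (rule ccontr)
        assume n: "(p!Suc i, p!Suc (Suc i)) \<notin> E"
        then have "(p!Suc (Suc i), p!Suc i) \<in> E" using pS[of "Suc i"] Suc.prems by auto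
        then obtain d where d: "d \<in> Z" "(p!Suc i, d) \<in> E\<^sup>*" using nk IH unfolding nok_def by auto
        have "(x, d) \<in> E\<^sup>*" using IH(2) d(2) by simp
        then have "(x,x) \<in> E\<^sup>+" using d(1) unfolding Z_def by (simp add: rtrancl_into_trancl1)
        then show False using ac unfolding acyclic_def by blast
      qed
      then show ?case using IH by (meson rtrancl.rtrancl_into_rtrancl)
    qed
  qed
  have "Suc (length p - 2) < length p" "Suc (length p - 2) = length p - 1" using len by auto
  then have "(x, p!(length p - 1)) \<in> E\<^sup>*" using claim[of "length p - 2"] by simp
  moreover have "p!(length p - 1) = y" using p(4) \<open>p \<noteq> []\<close> by (simp add: last_conv_nth)
  ultimately show False using xy by simp
qed



lemma rev_covered:
  assumes dag: "is_dag V E" and r: "reversible V E v w"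
  shows "(u,w) \<in> E \<longleftrightarrow> (u = v \<or> (u,v) \<in> E)"
proof -
  define E' where "E' = reverse_edge E v w"
  have vw: "(v,w) \<in> E" and dag': "is_dag V E'" and me: "markov_equiv V E E'"
    using r unfolding reversible_def E'_def by auto
  have ac: "acyclic E" and EV: "E \<subseteq> V \<times> V" using dag unfolding is_dag_def by auto
  have ac': "acyclic E'" and EV': "E' \<subseteq> V \<times> V" using dag' unfolding is_dag_def by auto
  have memE': "\<And>s t. (s,t) \<in> E' \<longleftrightarrow> ((s,t) \<in> E \<and> (s,t) \<noteq> (v,w)) \<or> (s,t) = (w,v)"
    unfolding E'_def reverse_edge_def by auto
  have vnw: "v \<noteq> w" using acyc_irr[OF ac] vw by auto
  have wvE': "(w,v) \<in> E'" using memE' by auto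
  have MEQ: "\<And>a b Z. a \<in> V \<Longrightarrow> b \<in> V \<Longrightarrow> a \<noteq> b \<Longrightarrow> Z \<subseteq> V - {a,b} \<Longrightarrow>
      d_connected V E a b Z \<longleftrightarrow> d_connected V E' a b Z"
    using me unfolding markov_equiv_def d_separated_def by blast
  have one: "(u,v) \<in> E \<Longrightarrow> (u,w) \<in> E"
  proof (rule ccontr)
    assume uv: "(u,v) \<in> E" and uw: "(u,w) \<notin> E"
    have unv: "u \<noteq> v" using acyc_irr[OF ac] uv by auto
    have unw: "u \<noteq> w" using acyc_asym[OF ac vw] uv by auto
    have wu: "(w,u) \<notin> E"
    proof
      assume wu1: "(w,u) \<in> E"
      have "(u,w) \<in> E\<^sup>+" using uv vw by (meson r_into_trancl' trancl_into_trancl)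
      then have "(u,u) \<in> E\<^sup>+" using wu1 by (meson trancl_into_trancl)
      then show False using ac unfolding acyclic_def by blast
    qed
    have uvE': "(u,v) \<in> E'" using memE' uv unv by auto
    have uwE': "(u,w) \<notin> E'" using memE' uw unw by auto
    have wuE': "(w,u) \<notin> E'" using memE' wu unv by auto
    have UV: "u \<in> V" "v \<in> V" "w \<in> V" using EV uv vw by auto
    have "(u,w) \<notin> E'\<^sup>* \<or> (w,u) \<notin> E'\<^sup>*"
    proof (rule ccontr)
      assume "\<not> ?thesis"
      then have "(u,w) \<in> E'\<^sup>+" "(w,u) \<in> E'\<^sup>*" using unw by (auto simp: rtrancl_eq_or_trancl)
      then have "(u,u) \<in> E'\<^sup>+" by auto
      then show False using ac' unfolding acyclic_def by blast
    qed
    then show False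
    proof
      assume nr: "(u,w) \<notin> E'\<^sup>*"
      define Z where "Z = {t. (t,u) \<in> E'}"
      have "\<not> d_connected V E' u w Z" using local_markov[OF dag' wuE' nr] unfolding Z_def .
      moreover have "v \<notin> Z" using acyc_asym[OF ac' uvE'] unfolding Z_def by simp
      then have "d_connected V E u w Z" using chain3[OF dag uv vw unw] by blast
      moreover have "Z \<subseteq> V - {u,w}" using EV' acyc_irr[OF ac'] wuE' unfolding Z_def by auto
      ultimately show False using MEQ[of u w Z] UV unw by blast
    next
      assume nr: "(w,u) \<notin> E'\<^sup>*"
      define Z where "Z = {t. (t,w) \<in> E'}"
      have "\<not> d_connected V E' w u Z" using local_markov[OF dag' uwE' nr] unfolding Z_def .
      moreover have "v \<notin> Z" using acyc_asym[OF ac' wvE'] unfolding Z_def by simp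
      then have "d_connected V E w u Z" using chain3[OF dag uv vw unw] by blast
      moreover have "Z \<subseteq> V - {w,u}" using EV' acyc_irr[OF ac'] uwE' unfolding Z_def by auto
      ultimately show False using MEQ[of w u Z] UV unw by blast
    qed
  qed
  have two: "(u,w) \<in> E \<Longrightarrow> u \<noteq> v \<Longrightarrow> (u,v) \<in> E"
  proof (rule ccontr)
    assume uw: "(u,w) \<in> E" and unv: "u \<noteq> v" and uv: "(u,v) \<notin> E"
    have unw: "u \<noteq> w" using acyc_irr[OF ac] uw by auto
    have uwE': "(u,w) \<in> E'" using memE' uw unv by auto
    have vu: "(v,u) \<notin> E"
    proof
      assume "(v,u) \<in> E"
      then have vu1: "(v,u) \<in> E'" using memE' unw by auto
      have "(w,u) \<in> E'\<^sup>+" using wvE' vu1 by (meson r_into_trancl' trancl_into_trancl)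
      then have "(w,w) \<in> E'\<^sup>+" using uwE' by (meson trancl_into_trancl)
      then show False using ac' unfolding acyclic_def by blast
    qed
    have wu: "(w,u) \<notin> E" using acyc_asym[OF ac uw] .
    have wv: "(w,v) \<notin> E" using acyc_asym[OF ac vw] .
    have UV: "u \<in> V" "v \<in> V" "w \<in> V" using EV uw vw by auto
    have "(u,v) \<notin> E\<^sup>* \<or> (v,u) \<notin> E\<^sup>*"
    proof (rule ccontr)
      assume "\<not> ?thesis"
      then have "(u,v) \<in> E\<^sup>+" "(v,u) \<in> E\<^sup>*" using unv by (auto simp: rtrancl_eq_or_trancl)
      then have "(u,u) \<in> E\<^sup>+" by auto
      then show False using ac unfolding acyclic_def by blast
    qed
    then show False
    proof
      assume nr: "(u,v) \<notin> E\<^sup>*"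
      define Z where "Z = {t. (t,u) \<in> E}"
      have "\<not> d_connected V E u v Z" using local_markov[OF dag vu nr] unfolding Z_def .
      moreover have "w \<notin> Z" using wu unfolding Z_def by simp
      then have "d_connected V E' u v Z" using chain3[OF dag' uwE' wvE' unv] by blast
      moreover have "Z \<subseteq> V - {u,v}" using EV acyc_irr[OF ac] vu unfolding Z_def by auto
      ultimately show False using MEQ[of u v Z] UV unv by blast
    next
      assume nr: "(v,u) \<notin> E\<^sup>*"
      define Z where "Z = {t. (t,v) \<in> E}"
      have "\<not> d_connected V E v u Z" using local_markov[OF dag uv nr] unfolding Z_def .
      moreover have "w \<notin> Z" using wv unfolding Z_def by simp
      then have "d_connected V E' v u Z" using chain3[OF dag' uwE' wvE' unv] by blast
      moreover have "Z \<subseteq> V - {v,u}" using EV acyc_irr[OF ac] uv unfolding Z_def by auto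
      ultimately show False using MEQ[of v u Z] UV unv by blast
    qed
  qed
  show ?thesis using one two vw by blast
qed

lemma me_trans: "markov_equiv V A B \<Longrightarrow> markov_equiv V B C \<Longrightarrow> markov_equiv V A C"
  unfolding markov_equiv_def by metis

definition revT :: "('a \<times> 'a) set \<Rightarrow> ('a \<times> 'a) set \<Rightarrow> ('a \<times> 'a) set" where
  "revT E T = (E - T) \<union> converse T"

theorem mainTheorem4:
  fixes V :: "'a set" and E S :: "('a \<times> 'a) set"
  assumes "is_dag V E"
    and "S \<subseteq> E"
    and "\<forall>(v, w) \<in> S. reversible V E v w"
    and "edge_matching S"
  shows "2 ^ card S \<le> card (MEC V E)"
proof -
  note dag = assms(1)
  have ac: "acyclic E" and EV: "E \<subseteq> V \<times> V" and fV: "finite V" using dag unfolding is_dag_def by auto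
  have fVV: "finite (V \<times> V)" using fV by (rule finite_cartesian_product[OF _ fV])
  have SVV: "S \<subseteq> V \<times> V" using assms(2) EV by (rule subset_trans)
  have fS: "finite S" by (rule finite_subset[OF SVV fVV])
  have match: "\<And>a b c d. (a,b) \<in> S \<Longrightarrow> (c,d) \<in> S \<Longrightarrow> (a,b) \<noteq> (c,d) \<Longrightarrow> a \<noteq> c \<and> a \<noteq> d \<and> b \<noteq> c \<and> b \<noteq> d"
  proof -
    fix a b c d assume h: "(a,b) \<in> S" "(c,d) \<in> S" "(a,b) \<noteq> (c,d)"
    have "\<forall>e \<in> S. \<forall>f \<in> S. e \<noteq> f \<longrightarrow> {fst e, snd e} \<inter> {fst f, snd f} = {}" using assms(4) unfolding edge_matching_def .
    then have "\<forall>f \<in> S. (a,b) \<noteq> f \<longrightarrow> {fst (a,b), snd (a,b)} \<inter> {fst f, snd f} = {}"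
      using h(1) by (rule bspec)
    then have "(a,b) \<noteq> (c,d) \<longrightarrow> {fst (a,b), snd (a,b)} \<inter> {fst (c,d), snd (c,d)} = {}"
      using h(2) by (rule bspec)
    then have "{a, b} \<inter> {c, d} = {}" using h(3) by simp
    then show "a \<noteq> c \<and> a \<noteq> d \<and> b \<noteq> c \<and> b \<noteq> d" by auto
  qed
  have key: "T \<subseteq> S \<Longrightarrow> is_dag V (revT E T) \<and> markov_equiv V E (revT E T)" for T
  proof -
    assume TS: "T \<subseteq> S"
    have fT: "finite T" using TS fS finite_subset by blast
    show ?thesis using fT TS
    proof (induction T rule: finite_induct)
      case empty
      then show ?case using dag unfolding revT_def markov_equiv_def by simp
    next
      case (insert e T)
      obtain v w where e: "e = (v,w)" by (cases e)
      have eS: "(v,w) \<in> S" using insert e by auto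
      have IH: "is_dag V (revT E T)" "markov_equiv V E (revT E T)" using insert by auto
      have touch: "\<And>a b. (a,b) \<in> T \<Longrightarrow> a \<noteq> v \<and> a \<noteq> w \<and> b \<noteq> v \<and> b \<noteq> w"
      proof -
        fix a b assume ab: "(a,b) \<in> T"
        have abS: "(a,b) \<in> S" using ab insert.prems by blast
        have abne: "(a,b) \<noteq> (v,w)" using ab insert.hyps(2) e by blast
        show "a \<noteq> v \<and> a \<noteq> w \<and> b \<noteq> v \<and> b \<noteq> w" using match[OF abS eS abne] by simp
      qed
      define R where "R = revT E T"
      have vwE: "(v,w) \<in> E" using eS assms(2) by auto
      have vwT: "(v,w) \<notin> T" "(w,v) \<notin> T" using touch by blast+
      have vwR: "(v,w) \<in> R" unfolding R_def revT_def using vwE vwT by simp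
      have Rw: "\<And>u. (u,w) \<in> R \<longleftrightarrow> (u,w) \<in> E"
      proof -
        fix u
        have "(u,w) \<notin> T" "(w,u) \<notin> T" using touch by blast+
        then show "(u,w) \<in> R \<longleftrightarrow> (u,w) \<in> E" unfolding R_def revT_def by simp
      qed
      have Rv: "\<And>u. (u,v) \<in> R \<longleftrightarrow> (u,v) \<in> E"
      proof -
        fix u
        have "(u,v) \<notin> T" "(v,u) \<notin> T" using touch by blast+
        then show "(u,v) \<in> R \<longleftrightarrow> (u,v) \<in> E" unfolding R_def revT_def by simp
      qed
      have rv: "reversible V E v w" using assms(3) eS by auto
      have cvR: "\<And>u. (u,w) \<in> R \<longleftrightarrow> (u = v \<or> (u,v) \<in> R)"
        by (simp only: Rw Rv rev_covered[OF dag rv])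
      have ce: "is_dag V (reverse_edge R v w) \<and> markov_equiv V R (reverse_edge R v w)"
        using covered_equiv[OF IH(1)[folded R_def] vwR cvR] .
      have eq: "reverse_edge R v w = revT E (insert e T)"
        unfolding R_def revT_def reverse_edge_def e using vwT(2) by auto
      have "markov_equiv V E (reverse_edge R v w)"
        using me_trans[OF IH(2)[folded R_def]] ce by blast
      then show ?case using ce eq by simp
    qed
  qed
  have inj: "inj_on (revT E) (Pow S)"
  proof (rule inj_onI)
    have one: "\<And>T1 T2. T1 \<subseteq> S \<Longrightarrow> T2 \<subseteq> S \<Longrightarrow> revT E T1 = revT E T2 \<Longrightarrow> T1 \<subseteq> T2"
    proof
      fix T1 T2 e assume h: "T1 \<subseteq> S" "T2 \<subseteq> S" "revT E T1 = revT E T2" "e \<in> T1"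
      obtain v w where e: "e = (v,w)" by (cases e)
      have vwE: "(v,w) \<in> E" using h e assms(2) by auto
      have "(w,v) \<notin> E" using acyc_asym[OF ac vwE] .
      moreover have "(w,v) \<in> revT E T1" using h(4) e unfolding revT_def by simp
      then have "(w,v) \<in> revT E T2" using h(3) by simp
      ultimately show "e \<in> T2" using e unfolding revT_def by simp
    qed
    fix T1 T2 assume "T1 \<in> Pow S" "T2 \<in> Pow S" "revT E T1 = revT E T2"
    then show "T1 = T2" using one by (metis PowD subset_antisym)
  qed
  have sub: "revT E ` Pow S \<subseteq> MEC V E" using key unfolding MEC_def by auto
  have fin: "finite (MEC V E)"
  proof -
    have "MEC V E \<subseteq> Pow (V \<times> V)" unfolding MEC_def is_dag_def by auto
    moreover have "finite (Pow (V \<times> V))" using fVV by (rule finite_Pow_iff[THEN iffD2])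
    ultimately show ?thesis by (rule finite_subset)
  qed
  have "card (revT E ` Pow S) = 2 ^ card S" using card_image[OF inj] card_Pow fS by simp
  then show ?thesis using card_mono[OF fin sub] by simp
qed


end
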